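(* Let $X,Y$ be finite sets, $\mu\in\mathcal P(X)$, $\nu\in\mathcal P(Y)$, $M$ a positive integer, and $\pi_1,\pi_2\in\Pi(\mu,\nu)$. Define the assignment graph as the bipartite directed graph on vertex set $X\sqcup Y$ with edge set $\{x\to y:\pi_2(x,y)\ge\mu(x)\nu(y)/M\}\sqcup\{y\to x:\pi_1(x,y)\ge\mu(x)\nu(y)/M\}$. Then: (i) every vertex has at least one incoming and at least one outgoing edge; (ii) if $X_0\subset X$, $Y_0\subset Y$ are such that there is no edge from $X_0\cup Y_0$ to a vertex outside $X_0\cup Y_0$, then $|\mu(X_0)-\nu(Y_0)|<1/M$; the same holds if there is no edge from a vertex outside $X_0\cup Y_0$ into $X_0\cup Y_0$; if moreover $\mu=r/M$, $\nu=s/M$ with $r\in\mathbb Z_{++}^X$, $s\in\mathbb Z_{++}^Y$, then $\mu(X_0)=\nu(Y_0)$; (iii) if $\mu=r/M$, $\nu=s/M$ with $r\in\mathbb Z_{++}^X$, $s\in\mathbb Z_{++}^Y$, and $\{(X_i,Y_i)\}_{i=1}^R$ are the vertex sets of the strongly connected components of the assignment graph (each $X_i\subset X$, $Y_i\subset Y$), then $\{X_i\}_{i=1}^R$ and $\{Y_i\}_{i=1}^R$ are partitions of $X$ and $Y$ and $\mu(X_i)=\nu(Y_i)$ for $i=1,\dots,R$.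
   Context: $\Pi(\mu,\nu)=\{\pi\in\mathbb R_+^{X\times Y}:\sum_y\pi(x,y)=\mu(x)\ \forall x,\ \sum_x\pi(x,y)=\nu(y)\ \forall y\}$. For $A\subset X$, $\mu(A)=\sum_{x\in A}\mu(x)$. $\mathbb Z_{++}$ denotes strictly positive integers. *)

theory Defs
  imports Complex_Main "HOL-Library.Disjoint_Sets"
begin

definition is_prob :: "('a::finite \<Rightarrow> real) \<Rightarrow> bool" where
  "is_prob \<mu> \<longleftrightarrow> (\<forall>x. \<mu> x \<ge> 0) \<and> sum \<mu> UNIV = 1"

definition couplings :: "('x::finite \<Rightarrow> real) \<Rightarrow> ('y::finite \<Rightarrow> real) \<Rightarrow> ('x \<times> 'y \<Rightarrow> real) set" where
  "couplings \<mu> \<nu> = {\<pi>. (\<forall>p. \<pi> p \<ge> 0) \<and> (\<forall>x. (\<Sum>y\<in>UNIV. \<pi> (x, y)) = \<mu> x)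
                       \<and> (\<forall>y. (\<Sum>x\<in>UNIV. \<pi> (x, y)) = \<nu> y)}"

fun assign_edge :: "nat \<Rightarrow> ('x \<Rightarrow> real) \<Rightarrow> ('y \<Rightarrow> real) \<Rightarrow> ('x \<times> 'y \<Rightarrow> real) \<Rightarrow> ('x \<times> 'y \<Rightarrow> real)
    \<Rightarrow> 'x + 'y \<Rightarrow> 'x + 'y \<Rightarrow> bool" where
  "assign_edge M \<mu> \<nu> \<pi>1 \<pi>2 (Inl x) (Inr y) = (\<pi>2 (x, y) \<ge> \<mu> x * \<nu> y / real M)"
| "assign_edge M \<mu> \<nu> \<pi>1 \<pi>2 (Inr y) (Inl x) = (\<pi>1 (x, y) \<ge> \<mu> x * \<nu> y / real M)"
| "assign_edge M \<mu> \<nu> \<pi>1 \<pi>2 (Inl x) (Inl x') = False"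
| "assign_edge M \<mu> \<nu> \<pi>1 \<pi>2 (Inr y) (Inr y') = False"

definition sccs :: "('v \<Rightarrow> 'v \<Rightarrow> bool) \<Rightarrow> 'v set set" where
  "sccs E = {{v. E\<^sup>*\<^sup>* u v \<and> E\<^sup>*\<^sup>* v u} | u. True}"

definition out_closed :: "('v \<Rightarrow> 'v \<Rightarrow> bool) \<Rightarrow> 'v set \<Rightarrow> bool" where
  "out_closed E S \<longleftrightarrow> (\<forall>u v. u \<in> S \<longrightarrow> v \<notin> S \<longrightarrow> \<not> E u v)"

definition in_closed :: "('v \<Rightarrow> 'v \<Rightarrow> bool) \<Rightarrow> 'v set \<Rightarrow> bool" where
  "in_closed E S \<longleftrightarrow> (\<forall>u v. u \<notin> S \<longrightarrow> v \<in> S \<longrightarrow> \<not> E u v)"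

end

theory Submission
  imports Defs
begin

lemma gen_bound:
  fixes p :: "'a::finite \<Rightarrow> 'b::finite \<Rightarrow> real" and f :: "'a \<Rightarrow> real" and g :: "'b \<Rightarrow> real"
  assumes p0: "\<And>a b. p a b \<ge> 0" and pf: "\<And>a. (\<Sum>b\<in>UNIV. p a b) = f a"
    and pg: "\<And>b. (\<Sum>a\<in>UNIV. p a b) = g b"
    and f0: "\<And>a. f a \<ge> 0" and g0: "\<And>b. g b \<ge> 0" and f1: "sum f UNIV = 1" and g1: "sum g UNIV = 1"
    and M: "M > 0"
    and cl: "\<And>a b. a \<in> A \<Longrightarrow> b \<notin> B \<Longrightarrow> p a b < f a * g b / real M"
  shows "sum f A - sum g B < 1 / real M"
proof -
  have Mpos: "1 / real M > 0" using M by simp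
  have fA: "sum f A \<le> 1" using f1 f0 sum_mono2[of UNIV A f] by auto
  have gB: "sum g (-B) \<le> 1" using g1 g0 sum_mono2[of UNIV "-B" g] by auto
  have fA0: "sum f A \<ge> 0" using f0 by (simp add: sum_nonneg)
  have gB0: "sum g B \<ge> 0" "sum g (-B) \<ge> 0" using g0 by (simp_all add: sum_nonneg)
  show ?thesis
  proof (cases "A = {} \<or> B = UNIV")
    case True
    then show ?thesis
    proof
      assume "A = {}" then have "sum f A = 0" by simp
      then show ?thesis using gB0 Mpos by linarith
    next
      assume "B = UNIV" then have "sum g B = 1" using g1 by simp
      then show ?thesis using fA Mpos by linarith
    qed
  next
    case False
    then have An: "A \<noteq> {}" and Bn: "-B \<noteq> {}" by auto
    have split: "f a = (\<Sum>b\<in>B. p a b) + (\<Sum>b\<in>-B. p a b)" for a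
    proof -
      have "(\<Sum>b\<in>B \<union> -B. p a b) = (\<Sum>b\<in>B. p a b) + (\<Sum>b\<in>-B. p a b)"
        by (rule sum.union_disjoint) auto
      moreover have "B \<union> -B = UNIV" by auto
      ultimately show ?thesis using pf[of a] by simp
    qed
    have e: "sum f A = (\<Sum>a\<in>A. \<Sum>b\<in>B. p a b) + (\<Sum>a\<in>A. \<Sum>b\<in>-B. p a b)"
      unfolding sum.distrib[symmetric] by (rule sum.cong) (auto simp: split)
    have "(\<Sum>a\<in>A. \<Sum>b\<in>B. p a b) \<le> (\<Sum>a\<in>UNIV. \<Sum>b\<in>B. p a b)"
      by (rule sum_mono2) (auto intro: sum_nonneg p0)
    also have "\<dots> = (\<Sum>b\<in>B. \<Sum>a\<in>UNIV. p a b)" by (rule sum.swap)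
    also have "\<dots> = sum g B" by (simp add: pg)
    finally have 1: "(\<Sum>a\<in>A. \<Sum>b\<in>B. p a b) \<le> sum g B" .
    have 2: "(\<Sum>a\<in>A. \<Sum>b\<in>-B. p a b) < (\<Sum>a\<in>A. \<Sum>b\<in>-B. f a * g b / real M)"
      using An Bn by (auto intro!: sum_strict_mono cl)
    have 3: "(\<Sum>a\<in>A. \<Sum>b\<in>-B. f a * g b / real M) = sum f A * sum g (-B) / real M"
      by (simp add: sum_product sum_divide_distrib)
    have 4: "sum f A * sum g (-B) \<le> 1" using fA gB fA0 gB0 by (simp add: mult_le_one)
    have 5: "sum f A * sum g (-B) / real M \<le> 1 / real M"
      using 4 M by (simp add: divide_right_mono)
    show ?thesis using e 1 2 3 5 by linarith
  qed
qed

lemma gen_exists: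
  fixes p :: "'a \<Rightarrow> 'b::finite \<Rightarrow> real"
  assumes pf: "(\<Sum>b\<in>UNIV. p a b) = f a" and g0: "\<And>b. g b \<ge> 0" and g1: "sum g UNIV = 1"
    and f0: "f a \<ge> 0" and M: "M > 0"
  shows "\<exists>b. p a b \<ge> f a * g b / real M"
proof (rule ccontr)
  assume "\<not> ?thesis"
  then have lt: "\<And>b. p a b < f a * g b / real M" by (auto simp: not_le)
  have "f a = (\<Sum>b\<in>UNIV. p a b)" using pf by simp
  also have "\<dots> < (\<Sum>b\<in>UNIV. f a * g b / real M)" by (rule sum_strict_mono) (auto intro: lt[rule_format])
  also have "\<dots> = f a * sum g UNIV / real M" by (simp add: sum_distrib_left sum_divide_distrib)
  also have "\<dots> \<le> f a" using g1 f0 M by (simp add: divide_le_eq mult_le_cancel_left1)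
  finally show False by simp
qed

lemma decomp: "S = Inl ` {x. Inl x \<in> S} \<union> Inr ` {y. Inr y \<in> S}"
  apply (rule set_eqI)
  subgoal for v by (cases v) auto
  done

lemma compl_img: "-(Inl ` X \<union> Inr ` Y) = Inl ` (-X) \<union> Inr ` (-Y)"
  apply (rule set_eqI)
  subgoal for v by (cases v) auto
  done

lemma cls_eq:
  assumes "a \<in> {v. R\<^sup>*\<^sup>* u v \<and> R\<^sup>*\<^sup>* v u}" "a \<in> {v. R\<^sup>*\<^sup>* w v \<and> R\<^sup>*\<^sup>* v w}"
  shows "{v. R\<^sup>*\<^sup>* u v \<and> R\<^sup>*\<^sup>* v u} = {v. R\<^sup>*\<^sup>* w v \<and> R\<^sup>*\<^sup>* v w}"
  using assms by (auto intro: rtranclp_trans)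

theorem mainTheorem7:
  fixes \<mu> :: "'x::finite \<Rightarrow> real" and \<nu> :: "'y::finite \<Rightarrow> real" and M :: nat
    and \<pi>1 \<pi>2 :: "'x \<times> 'y \<Rightarrow> real"
  assumes "is_prob \<mu>" and "is_prob \<nu>" and "M > 0"
    and "\<pi>1 \<in> couplings \<mu> \<nu>" and "\<pi>2 \<in> couplings \<mu> \<nu>"
  defines "E \<equiv> assign_edge M \<mu> \<nu> \<pi>1 \<pi>2"
  shows
    "(\<forall>v. (\<exists>u. E u v) \<and> (\<exists>w. E v w))
   \<and> (\<forall>X0 Y0. out_closed E (Inl ` X0 \<union> Inr ` Y0)
        \<longrightarrow> \<bar>sum \<mu> X0 - sum \<nu> Y0\<bar> < 1 / real M)
   \<and> (\<forall>X0 Y0. in_closed E (Inl ` X0 \<union> Inr ` Y0)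
        \<longrightarrow> \<bar>sum \<mu> X0 - sum \<nu> Y0\<bar> < 1 / real M)
   \<and> (\<forall>(r :: 'x \<Rightarrow> int) (s :: 'y \<Rightarrow> int).
        (\<forall>x. r x > 0) \<and> (\<forall>y. s y > 0)
        \<and> \<mu> = (\<lambda>x. of_int (r x) / real M) \<and> \<nu> = (\<lambda>y. of_int (s y) / real M)
      \<longrightarrow> (\<forall>X0 Y0. out_closed E (Inl ` X0 \<union> Inr ` Y0) \<or> in_closed E (Inl ` X0 \<union> Inr ` Y0)
              \<longrightarrow> sum \<mu> X0 = sum \<nu> Y0)
        \<and> disjoint_family_on (\<lambda>C. {x. Inl x \<in> C}) (sccs E)
        \<and> (\<Union>C\<in>sccs E. {x. Inl x \<in> C}) = UNIV
        \<and> (\<forall>C\<in>sccs E. {x. Inl x \<in> C} \<noteq> {})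
        \<and> disjoint_family_on (\<lambda>C. {y. Inr y \<in> C}) (sccs E)
        \<and> (\<Union>C\<in>sccs E. {y. Inr y \<in> C}) = UNIV
        \<and> (\<forall>C\<in>sccs E. {y. Inr y \<in> C} \<noteq> {})
        \<and> (\<forall>C\<in>sccs E. sum \<mu> {x. Inl x \<in> C} = sum \<nu> {y. Inr y \<in> C}))"
proof -
  have mu0: "\<And>x. \<mu> x \<ge> 0" and mu1: "sum \<mu> UNIV = 1" using assms(1) by (auto simp: is_prob_def)
  have nu0: "\<And>y. \<nu> y \<ge> 0" and nu1: "sum \<nu> UNIV = 1" using assms(2) by (auto simp: is_prob_def)
  have p10: "\<And>p. \<pi>1 p \<ge> 0" and p1x: "\<And>x. (\<Sum>y\<in>UNIV. \<pi>1 (x, y)) = \<mu> x"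
    and p1y: "\<And>y. (\<Sum>x\<in>UNIV. \<pi>1 (x, y)) = \<nu> y" using assms(4) by (auto simp: couplings_def)
  have p20: "\<And>p. \<pi>2 p \<ge> 0" and p2x: "\<And>x. (\<Sum>y\<in>UNIV. \<pi>2 (x, y)) = \<mu> x"
    and p2y: "\<And>y. (\<Sum>x\<in>UNIV. \<pi>2 (x, y)) = \<nu> y" using assms(5) by (auto simp: couplings_def)
  have M: "M > 0" by fact
  have part1: "\<forall>v. (\<exists>u. E u v) \<and> (\<exists>w. E v w)"
  proof
    fix v show "(\<exists>u. E u v) \<and> (\<exists>w. E v w)"
    proof (cases v)
      case (Inl x)
      obtain y where y: "\<pi>1 (x, y) \<ge> \<mu> x * \<nu> y / real M"
        using gen_exists[of "\<lambda>x y. \<pi>1 (x, y)" x \<mu> \<nu> M] p1x nu0 nu1 mu0 M by blast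
      obtain y' where y': "\<pi>2 (x, y') \<ge> \<mu> x * \<nu> y' / real M"
        using gen_exists[of "\<lambda>x y. \<pi>2 (x, y)" x \<mu> \<nu> M] p2x nu0 nu1 mu0 M by blast
      have "E (Inr y) v" using y Inl by (simp add: E_def)
      moreover have "E v (Inr y')" using y' Inl by (simp add: E_def)
      ultimately show ?thesis by blast
    next
      case (Inr y)
      obtain x where x: "\<pi>2 (x, y) \<ge> \<nu> y * \<mu> x / real M"
        using gen_exists[of "\<lambda>y x. \<pi>2 (x, y)" y \<nu> \<mu> M] p2y nu0 mu1 mu0 M by blast
      obtain x' where x': "\<pi>1 (x', y) \<ge> \<nu> y * \<mu> x' / real M"
        using gen_exists[of "\<lambda>y x. \<pi>1 (x, y)" y \<nu> \<mu> M] p1y nu0 mu1 mu0 M by blast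
      have "E (Inl x) v" using x Inr by (simp add: E_def mult.commute)
      moreover have "E v (Inl x')" using x' Inr by (simp add: E_def mult.commute)
      ultimately show ?thesis by blast
    qed
  qed
  have outb: "\<bar>sum \<mu> X0 - sum \<nu> Y0\<bar> < 1 / real M" if oc: "out_closed E (Inl ` X0 \<union> Inr ` Y0)" for X0 Y0
  proof -
    have c2: "\<pi>2 (x, y) < \<mu> x * \<nu> y / real M" if "x \<in> X0" "y \<notin> Y0" for x y
    proof -
      have "\<not> E (Inl x) (Inr y)" using oc that unfolding out_closed_def by auto
      then show ?thesis by (simp add: E_def not_le)
    qed
    have c1: "\<pi>1 (x, y) < \<nu> y * \<mu> x / real M" if "y \<in> Y0" "x \<notin> X0" for x y
    proof -
      have "\<not> E (Inr y) (Inl x)" using oc that unfolding out_closed_def by auto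
      then show ?thesis by (simp add: E_def not_le mult.commute)
    qed
    have a: "sum \<mu> X0 - sum \<nu> Y0 < 1 / real M"
      by (rule gen_bound[of "\<lambda>x y. \<pi>2 (x, y)"]) (use p20 p2x p2y mu0 nu0 mu1 nu1 M c2 in auto)
    have b: "sum \<nu> Y0 - sum \<mu> X0 < 1 / real M"
      by (rule gen_bound[of "\<lambda>y x. \<pi>1 (x, y)"]) (use p10 p1x p1y mu0 nu0 mu1 nu1 M c1 in auto)
    show ?thesis using a b by linarith
  qed
  have inb: "\<bar>sum \<mu> X0 - sum \<nu> Y0\<bar> < 1 / real M" if ic: "in_closed E (Inl ` X0 \<union> Inr ` Y0)" for X0 Y0
  proof -
    have "out_closed E (Inl ` (-X0) \<union> Inr ` (-Y0))"
      using ic unfolding compl_img[symmetric] out_closed_def in_closed_def by blast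
    then have h: "\<bar>sum \<mu> (-X0) - sum \<nu> (-Y0)\<bar> < 1 / real M" by (rule outb)
    have "sum \<mu> (-X0) = 1 - sum \<mu> X0" using mu1 sum_diff[of UNIV X0 \<mu>]
      by (simp add: Compl_eq_Diff_UNIV)
    moreover have "sum \<nu> (-Y0) = 1 - sum \<nu> Y0" using nu1 sum_diff[of UNIV Y0 \<nu>]
      by (simp add: Compl_eq_Diff_UNIV)
    ultimately show ?thesis using h by (simp add: abs_minus_commute)
  qed
  have part4: "(\<forall>X0 Y0. out_closed E (Inl ` X0 \<union> Inr ` Y0) \<or> in_closed E (Inl ` X0 \<union> Inr ` Y0)
              \<longrightarrow> sum \<mu> X0 = sum \<nu> Y0)
        \<and> disjoint_family_on (\<lambda>C. {x. Inl x \<in> C}) (sccs E)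
        \<and> (\<Union>C\<in>sccs E. {x. Inl x \<in> C}) = UNIV
        \<and> (\<forall>C\<in>sccs E. {x. Inl x \<in> C} \<noteq> {})
        \<and> disjoint_family_on (\<lambda>C. {y. Inr y \<in> C}) (sccs E)
        \<and> (\<Union>C\<in>sccs E. {y. Inr y \<in> C}) = UNIV
        \<and> (\<forall>C\<in>sccs E. {y. Inr y \<in> C} \<noteq> {})
        \<and> (\<forall>C\<in>sccs E. sum \<mu> {x. Inl x \<in> C} = sum \<nu> {y. Inr y \<in> C})"
    if H: "(\<forall>x. r x > 0) \<and> (\<forall>y. s y > 0)
        \<and> \<mu> = (\<lambda>x. of_int (r x) / real M) \<and> \<nu> = (\<lambda>y. of_int (s y) / real M)"
    for r :: "'x \<Rightarrow> int" and s :: "'y \<Rightarrow> int"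
  proof -
    have hm: "\<mu> = (\<lambda>x. of_int (r x) / real M)" and hn: "\<nu> = (\<lambda>y. of_int (s y) / real M)"
      and rp: "\<And>x. r x > 0" and sp: "\<And>y. s y > 0" using H by auto
    have intc: "sum \<mu> X0 = sum \<nu> Y0" if lt: "\<bar>sum \<mu> X0 - sum \<nu> Y0\<bar> < 1 / real M" for X0 Y0
    proof -
      have e1: "sum \<mu> X0 = real_of_int (sum r X0) / real M" by (simp add: hm sum_divide_distrib)
      have e2: "sum \<nu> Y0 = real_of_int (sum s Y0) / real M" by (simp add: hn sum_divide_distrib)
      have "\<bar>real_of_int (sum r X0 - sum s Y0)\<bar> / real M < 1 / real M"
        using lt unfolding e1 e2 by (simp add: diff_divide_distrib[symmetric])
      then have "\<bar>real_of_int (sum r X0 - sum s Y0)\<bar> < 1" using M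
        by (simp add: divide_less_cancel)
      then have "sum r X0 = sum s Y0" by linarith
      then show ?thesis using e1 e2 by simp
    qed
    have eq4: "\<forall>X0 Y0. out_closed E (Inl ` X0 \<union> Inr ` Y0) \<or> in_closed E (Inl ` X0 \<union> Inr ` Y0)
              \<longrightarrow> sum \<mu> X0 = sum \<nu> Y0" using intc outb inb by blast
    have balS: "sum \<mu> {x. Inl x \<in> S} = sum \<nu> {y. Inr y \<in> S}" if "out_closed E S" for S
      using eq4 that decomp[of S] by metis
    define C where "C u = {v. E\<^sup>*\<^sup>* u v \<and> E\<^sup>*\<^sup>* v u}" for u
    have sc: "sccs E = range C" by (auto simp: sccs_def C_def)
    have bal: "sum \<mu> {x. Inl x \<in> C u} = sum \<nu> {y. Inr y \<in> C u}" for u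
    proof -
      define Rs where "Rs = {v. E\<^sup>*\<^sup>* u v}"
      define Ds where "Ds = {v. E\<^sup>*\<^sup>* u v \<and> \<not> E\<^sup>*\<^sup>* v u}"
      have o1: "out_closed E Rs" unfolding out_closed_def Rs_def
        by (auto intro: rtranclp.rtrancl_into_rtrancl)
      have o2: "out_closed E Ds" unfolding out_closed_def Ds_def
        by (auto intro: rtranclp.rtrancl_into_rtrancl converse_rtranclp_into_rtranclp)
      have cx: "{x. Inl x \<in> C u} = {x. Inl x \<in> Rs} - {x. Inl x \<in> Ds}"
        and cy: "{y. Inr y \<in> C u} = {y. Inr y \<in> Rs} - {y. Inr y \<in> Ds}"
        by (auto simp: C_def Rs_def Ds_def)
      have "sum \<mu> {x. Inl x \<in> C u} = sum \<mu> {x. Inl x \<in> Rs} - sum \<mu> {x. Inl x \<in> Ds}"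
        unfolding cx by (rule sum_diff) (auto simp: Rs_def Ds_def)
      moreover have "sum \<nu> {y. Inr y \<in> C u} = sum \<nu> {y. Inr y \<in> Rs} - sum \<nu> {y. Inr y \<in> Ds}"
        unfolding cy by (rule sum_diff) (auto simp: Rs_def Ds_def)
      ultimately show ?thesis using balS[OF o1] balS[OF o2] by simp
    qed
    have mup: "\<mu> x > 0" for x using rp[of x] M by (simp add: hm)
    have nup: "\<nu> y > 0" for y using sp[of y] M by (simp add: hn)
    have nex: "{x. Inl x \<in> C u} \<noteq> {}" for u
    proof (cases u)
      case (Inl x) then show ?thesis by (auto simp: C_def)
    next
      case (Inr y)
      show ?thesis
      proof
        assume e: "{x. Inl x \<in> C u} = {}"
        have "y \<in> {y. Inr y \<in> C u}" using Inr by (simp add: C_def)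
        then have "\<nu> y \<le> sum \<nu> {y. Inr y \<in> C u}"
          by (rule member_le_sum) (auto intro: nu0)
        then show False using bal[of u] e nup[of y] by simp
      qed
    qed
    have ney: "{y. Inr y \<in> C u} \<noteq> {}" for u
    proof (cases u)
      case (Inr y) then show ?thesis by (auto simp: C_def)
    next
      case (Inl x)
      show ?thesis
      proof
        assume e: "{y. Inr y \<in> C u} = {}"
        have "x \<in> {x. Inl x \<in> C u}" using Inl by (simp add: C_def)
        then have "\<mu> x \<le> sum \<mu> {x. Inl x \<in> C u}"
          by (rule member_le_sum) (auto intro: mu0)
        then show False using bal[of u] e mup[of x] by simp
      qed
    qed
    have Ceq: "C u = C w" if "a \<in> C u" "a \<in> C w" for a u w
      using that unfolding C_def by (rule cls_eq)
    have dx: "disjoint_family_on (\<lambda>C. {x. Inl x \<in> C}) (sccs E)"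
      unfolding sc disjoint_family_on_def
    proof (intro ballI impI)
      fix m n assume "m \<in> range C" "n \<in> range C" "m \<noteq> n"
      then obtain u w where m: "m = C u" and n: "n = C w" and ne: "C u \<noteq> C w" by auto
      show "{x. Inl x \<in> m} \<inter> {x. Inl x \<in> n} = {}"
        unfolding m n using Ceq ne by auto
    qed
    have dy: "disjoint_family_on (\<lambda>C. {y. Inr y \<in> C}) (sccs E)"
      unfolding sc disjoint_family_on_def
    proof (intro ballI impI)
      fix m n assume "m \<in> range C" "n \<in> range C" "m \<noteq> n"
      then obtain u w where m: "m = C u" and n: "n = C w" and ne: "C u \<noteq> C w" by auto
      show "{y. Inr y \<in> m} \<inter> {y. Inr y \<in> n} = {}"
        unfolding m n using Ceq ne by auto
    qed
    have ux: "(\<Union>C\<in>sccs E. {x. Inl x \<in> C}) = UNIV"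
      unfolding sc by (auto simp: C_def)
    have uy: "(\<Union>C\<in>sccs E. {y. Inr y \<in> C}) = UNIV"
      unfolding sc by (auto simp: C_def)
    show ?thesis using eq4 dx dy ux uy nex ney bal unfolding sc by auto
  qed
  show ?thesis using part1 outb inb part4 by blast
qed

end
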